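(* Let $\mathsf{CS}$ be a constant specification for $\mathsf{LPC}^+$. The canonical relational model $\mathcal M=(W,W_N,R_{Fm},R_{Tm},V)$ for $\mathsf{LPC}^+_{\mathsf{CS}}$ is an $\mathsf{LPC}^+_{\mathsf{CS}}$-model.
   Context: Language: countable sets $\mathsf{Const}$, $\mathsf{Var}$, $\mathsf{Prop}$; terms $t ::= c \mid x \mid t\cdot t \mid t+t \mid\ !t$; formulas $\phi ::= p \mid \neg\phi \mid \phi\wedge\phi \mid \phi\supset\phi \mid \phi>\phi \mid t{:}\phi$; $\mathsf{Tm},\mathsf{Fm}$ the sets of terms and formulas; $\bot:=\chi\wedge\neg\chi$ for a fixed $\chi$. Axiom schemes of $\mathsf{LPC}^+$: (A1) all instances of classical tautologies; (A2) $(\phi>(\psi\supset\chi))\supset((\phi>\psi)\supset(\phi>\chi))$; (A3) $\phi>\phi$; (A4) $(\phi>\psi)\supset(\phi\supset\psi)$; (A5) $(s{:}(\phi>\psi)\wedge t{:}\phi) > (s\cdot t){:}\psi$; (A6) $s{:}\phi > (s+t){:}\phi$; (A7) $t{:}\phi>(s+t){:}\phi$; (A8) $t{:}\phi>\phi$; (A9) $t{:}\phi > (!t){:}t{:}\phi$. A constant specification $\mathsf{CS}$ is a set of $c{:}\phi$ with $c\in\mathsf{Const}$, $\phi$ an instance of (A1)–(A9). $\mathsf{LPC}^+_{\mathsf{CS}}$: axioms (A1)–(A9) and $\mathsf{CS}$; rules (MP) and (RCN): from $\psi$ infer $\phi>\psi$. $T\vdash\phi$ iff $\vdash(\psi_1\wedge\cdots\wedge\psi_n)\supset\phi$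 for some $\psi_i\in T$; $T$ consistent iff $T\nvdash\bot$; maximal consistent sets as usual. Relational models $(W,W_N,R_{Fm},R_{Tm},V)$: $W_N\subseteq W$ nonempty; $R_\phi\subseteq W_N\times W_N$ for each formula; $R_t\subseteq W\times W$ for each term; $V(w)\subseteq\mathsf{Prop}$ for $w\in W_N$, $V(w)\subseteq\mathsf{Fm}$ for $w\in W\setminus W_N$. Truth: at non-normal $w$, $w\models\phi$ iff $\phi\in V(w)$; at normal $w$: $p$ iff $p\in V(w)$, $\neg,\wedge,\supset$ classical, $\phi>\psi$ iff $R_\phi(w)\subseteq[\psi]$, $t{:}\phi$ iff $R_t(w)\subseteq[\phi]$, with $[\phi]=\{w\in W: w\models\phi\}$. An $\mathsf{LPC}^+_{\mathsf{CS}}$-model is a relational model such that for all $w\in W_N$: (1) $R_\phi(w)\subseteq[\phi]$ for all $\phi$; (2) if $w\in[\phi]$ then $w\in R_\phi(w)$; (3) $R_c(w)\subseteq[\phi]$ for each $c{:}\phi\in\mathsf{CS}$; (4) $R_{s+t}(w)\subseteq R_s(w)\cap R_t(w)$; (5) for all $v\in R_{s\cdot t}(w)$ and all $\phi,\psi$: if $w\in[s{:}(\phi>\psi)\wedge t{:}\phi]$ then $v\in[\psi]$; (6) $wR_tw$ for all $t$; (7) for all $t$ and $v,u\in W$, if $wR_{!t}v$ and $vR_tu$ then $wR_tu$. The canonical relational model for $\mathsf{LPC}^+_{\mathsf{CS}}$: $W$ is the set of all subsets of $\mathsf{Fm}$; $W_N$ is the set of maximal $\mathsf{LPC}^+_{\mathsf{CS}}$-consistent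 sets; for $\Gamma,\Delta\in W_N$, $\Gamma R_\phi\Delta$ iff $\Gamma/\phi\subseteq\Delta$ where $\Gamma/\phi=\{\psi:\phi>\psi\in\Gamma\}$; for $\Gamma,\Delta\in W$, $\Gamma R_t\Delta$ iff $\Gamma/t\subseteq\Delta$ where $\Gamma/t=\{\psi: t{:}\psi\in\Gamma\}$; $V(\Gamma)=\Gamma$ for $\Gamma\in W\setminus W_N$ and $V(\Gamma)=\mathsf{Prop}\cap\Gamma$ for $\Gamma\in W_N$. *)

theory Defs
  imports Main "HOL-Library.Countable"
begin

datatype ('c, 'v) tm =
    TConst 'c
  | TVar 'v
  | TApp "('c, 'v) tm" "('c, 'v) tm"
  | TPlus "('c, 'v) tm" "('c, 'v) tm"
  | TBang "('c, 'v) tm"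

datatype ('c, 'v, 'p) fm =
    Atom 'p
  | Neg "('c, 'v, 'p) fm"
  | Conj "('c, 'v, 'p) fm" "('c, 'v, 'p) fm"
  | Imp "('c, 'v, 'p) fm" "('c, 'v, 'p) fm"
  | Cond "('c, 'v, 'p) fm" "('c, 'v, 'p) fm"
  | Just "('c, 'v) tm" "('c, 'v, 'p) fm"

definition fbot :: "('c, 'v, 'p) fm \<Rightarrow> ('c, 'v, 'p) fm" where
  "fbot chi = Conj chi (Neg chi)"

text \<open>Propositional evaluation: formulas whose main connective is not
  classical (atoms, conditionals, justification formulas) are treated as
  propositional atoms.\<close>
fun tv :: "(('c, 'v, 'p) fm \<Rightarrow> bool) \<Rightarrow> ('c, 'v, 'p) fm \<Rightarrow> bool" where
  "tv v (Neg a) = (\<not> tv v a)"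
| "tv v (Conj a b) = (tv v a \<and> tv v b)"
| "tv v (Imp a b) = (tv v a \<longrightarrow> tv v b)"
| "tv v a = v a"

definition taut :: "('c, 'v, 'p) fm \<Rightarrow> bool" where
  "taut a = (\<forall>v. tv v a)"

inductive axiom :: "('c, 'v, 'p) fm \<Rightarrow> bool" where
  A1: "taut a \<Longrightarrow> axiom a"
| A2: "axiom (Imp (Cond a (Imp b c)) (Imp (Cond a b) (Cond a c)))"
| A3: "axiom (Cond a a)"
| A4: "axiom (Imp (Cond a b) (Imp a b))"
| A5: "axiom (Cond (Conj (Just s (Cond a b)) (Just t a)) (Just (TApp s t) b))"
| A6: "axiom (Cond (Just s a) (Just (TPlus s t) a))"
| A7: "axiom (Cond (Just t a) (Just (TPlus s t) a))"
| A8: "axiom (Cond (Just t a) a)"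
| A9: "axiom (Cond (Just t a) (Just (TBang t) (Just t a)))"

definition const_spec :: "('c, 'v, 'p) fm set \<Rightarrow> bool" where
  "const_spec CS = (\<forall>x\<in>CS. \<exists>c a. x = Just (TConst c) a \<and> axiom a)"

inductive deriv :: "('c, 'v, 'p) fm set \<Rightarrow> ('c, 'v, 'p) fm \<Rightarrow> bool"
  for CS :: "('c, 'v, 'p) fm set" where
  Ax: "axiom a \<Longrightarrow> deriv CS a"
| CSAx: "a \<in> CS \<Longrightarrow> deriv CS a"
| MP: "deriv CS (Imp a b) \<Longrightarrow> deriv CS a \<Longrightarrow> deriv CS b"
| RCN: "deriv CS b \<Longrightarrow> deriv CS (Cond a b)"

fun conjs :: "('c, 'v, 'p) fm list \<Rightarrow> ('c, 'v, 'p) fm" where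
  "conjs [] = undefined"
| "conjs [a] = a"
| "conjs (a # as) = Conj a (conjs as)"

text \<open>T \<turnstile> \<phi>: \<turnstile> (\<psi>1 \<and> ... \<and> \<psi>n) \<supset> \<phi> for some \<psi>i \<in> T (n \<ge> 1), or \<turnstile> \<phi>
  (the case n = 0).\<close>
definition derives :: "('c, 'v, 'p) fm set \<Rightarrow> ('c, 'v, 'p) fm set \<Rightarrow> ('c, 'v, 'p) fm \<Rightarrow> bool" where
  "derives CS T a = (deriv CS a \<or>
     (\<exists>ps. ps \<noteq> [] \<and> set ps \<subseteq> T \<and> deriv CS (Imp (conjs ps) a)))"

definition consistent :: "('c, 'v, 'p) fm \<Rightarrow> ('c, 'v, 'p) fm set \<Rightarrow> ('c, 'v, 'p) fm set \<Rightarrow> bool" where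
  "consistent chi CS T = (\<not> derives CS T (fbot chi))"

definition max_consistent :: "('c, 'v, 'p) fm \<Rightarrow> ('c, 'v, 'p) fm set \<Rightarrow> ('c, 'v, 'p) fm set \<Rightarrow> bool" where
  "max_consistent chi CS T = (consistent chi CS T \<and>
     (\<forall>a. a \<notin> T \<longrightarrow> \<not> consistent chi CS (insert a T)))"

text \<open>The valuation V is split into Vp (used at normal worlds, values in Prop)
  and Vf (used at non-normal worlds, values in Fm).\<close>
record ('w, 'c, 'v, 'p) rmodel =
  mW :: "'w set"
  mWN :: "'w set"
  mRf :: "('c, 'v, 'p) fm \<Rightarrow> ('w \<times> 'w) set"
  mRt :: "('c, 'v) tm \<Rightarrow> ('w \<times> 'w) set"
  mVp :: "'w \<Rightarrow> 'p set"
  mVf :: "'w \<Rightarrow> ('c, 'v, 'p) fm set"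

fun sat :: "('w, 'c, 'v, 'p) rmodel \<Rightarrow> 'w \<Rightarrow> ('c, 'v, 'p) fm \<Rightarrow> bool" where
  "sat M w (Atom p) = (if w \<in> mWN M then p \<in> mVp M w else Atom p \<in> mVf M w)"
| "sat M w (Neg a) = (if w \<in> mWN M then \<not> sat M w a else Neg a \<in> mVf M w)"
| "sat M w (Conj a b) = (if w \<in> mWN M then sat M w a \<and> sat M w b else Conj a b \<in> mVf M w)"
| "sat M w (Imp a b) = (if w \<in> mWN M then sat M w a \<longrightarrow> sat M w b else Imp a b \<in> mVf M w)"
| "sat M w (Cond a b) = (if w \<in> mWN M then (\<forall>v. (w, v) \<in> mRf M a \<longrightarrow> v \<in> mW M \<and> sat M v b)
                          else Cond a b \<in> mVf M w)"
| "sat M w (Just t a) = (if w \<in> mWN M then (\<forall>v. (w, v) \<in> mRt M t \<longrightarrow> v \<in> mW M \<and> sat M v a)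
                          else Just t a \<in> mVf M w)"

definition ext :: "('w, 'c, 'v, 'p) rmodel \<Rightarrow> ('c, 'v, 'p) fm \<Rightarrow> 'w set" where
  "ext M a = {w \<in> mW M. sat M w a}"

definition relational_model :: "('w, 'c, 'v, 'p) rmodel \<Rightarrow> bool" where
  "relational_model M = (mWN M \<subseteq> mW M \<and> mWN M \<noteq> {} \<and>
     (\<forall>a. mRf M a \<subseteq> mWN M \<times> mWN M) \<and>
     (\<forall>t. mRt M t \<subseteq> mW M \<times> mW M))"

definition lpc_model :: "('c, 'v, 'p) fm set \<Rightarrow> ('w, 'c, 'v, 'p) rmodel \<Rightarrow> bool" where
  "lpc_model CS M = (relational_model M \<and>
    (\<forall>w \<in> mWN M.
      (\<forall>a. mRf M a `` {w} \<subseteq> ext M a) \<and>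
      (\<forall>a. w \<in> ext M a \<longrightarrow> (w, w) \<in> mRf M a) \<and>
      (\<forall>c a. Just (TConst c) a \<in> CS \<longrightarrow> mRt M (TConst c) `` {w} \<subseteq> ext M a) \<and>
      (\<forall>s t. mRt M (TPlus s t) `` {w} \<subseteq> mRt M s `` {w} \<inter> mRt M t `` {w}) \<and>
      (\<forall>s t. \<forall>v \<in> mRt M (TApp s t) `` {w}. \<forall>a b.
          w \<in> ext M (Conj (Just s (Cond a b)) (Just t a)) \<longrightarrow> v \<in> ext M b) \<and>
      (\<forall>t. (w, w) \<in> mRt M t) \<and>
      (\<forall>t v u. (w, v) \<in> mRt M (TBang t) \<and> (v, u) \<in> mRt M t \<longrightarrow> (w, u) \<in> mRt M t)))"

definition cslash_f :: "('c, 'v, 'p) fm set \<Rightarrow> ('c, 'v, 'p) fm \<Rightarrow> ('c, 'v, 'p) fm set" where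
  "cslash_f G a = {b. Cond a b \<in> G}"

definition cslash_t :: "('c, 'v, 'p) fm set \<Rightarrow> ('c, 'v) tm \<Rightarrow> ('c, 'v, 'p) fm set" where
  "cslash_t G t = {b. Just t b \<in> G}"

definition canonical_model :: "('c, 'v, 'p) fm \<Rightarrow> ('c, 'v, 'p) fm set
    \<Rightarrow> (('c, 'v, 'p) fm set, 'c, 'v, 'p) rmodel" where
  "canonical_model chi CS =
     \<lparr> mW = UNIV,
       mWN = {G. max_consistent chi CS G},
       mRf = (\<lambda>a. {(G, D). max_consistent chi CS G \<and> max_consistent chi CS D \<and> cslash_f G a \<subseteq> D}),
       mRt = (\<lambda>t. {(G, D). cslash_t G t \<subseteq> D}),
       mVp = (\<lambda>G. {p. Atom p \<in> G}),
       mVf = (\<lambda>G. G) \<rparr>"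

end

theory Submission
  imports Defs
begin

fun imps :: "('c, 'v, 'p) fm list \<Rightarrow> ('c, 'v, 'p) fm \<Rightarrow> ('c, 'v, 'p) fm" where
  "imps [] a = a" | "imps (p#ps) a = Imp p (imps ps a)"

lemma tv_imps: "tv v (imps ps a) = ((\<forall>p\<in>set ps. tv v p) \<longrightarrow> tv v a)"
  by (induction ps) auto

lemma tv_conjs: "ps \<noteq> [] \<Longrightarrow> tv v (conjs ps) = (\<forall>p\<in>set ps. tv v p)"
  by (induction ps rule: conjs.induct) auto

lemma tv_bot[simp]: "tv v (fbot chi) = False" by (simp add: fbot_def)

lemma TC:
  assumes "\<forall>v. (\<forall>q\<in>set qs. tv v q) \<longrightarrow> tv v a" "\<forall>q\<in>set qs. deriv CS q"
  shows "deriv CS a"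
proof -
  have "deriv CS (imps qs a)"
    by (rule deriv.Ax, rule axiom.A1) (use assms(1) in \<open>auto simp: taut_def tv_imps\<close>)
  then show ?thesis using assms(2)
  proof (induction qs)
    case (Cons p ps)
    then show ?case using deriv.MP by auto
  qed simp
qed

definition dv where "dv CS T a = (\<exists>ps. set ps \<subseteq> T \<and> deriv CS (imps ps a))"

lemma derives_dv: "derives CS T a = dv CS T a"
proof
  assume "derives CS T a"
  then consider "deriv CS a" | ps where "ps \<noteq> []" "set ps \<subseteq> T" "deriv CS (Imp (conjs ps) a)"
    unfolding derives_def by blast
  then show "dv CS T a"
  proof cases
    case 1 then show ?thesis unfolding dv_def by (intro exI[of _ "[]"]) simp
  next
    case 2
    have "deriv CS (imps ps a)"
      by (rule TC[of "[Imp (conjs ps) a]"]) (use 2 in \<open>auto simp: tv_imps tv_conjs\<close>)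
    then show ?thesis using 2 unfolding dv_def by blast
  qed
next
  assume "dv CS T a"
  then obtain ps where ps: "set ps \<subseteq> T" "deriv CS (imps ps a)" unfolding dv_def by blast
  show "derives CS T a"
  proof (cases "ps = []")
    case True then show ?thesis using ps unfolding derives_def by simp
  next
    case False
    have "deriv CS (Imp (conjs ps) a)"
      by (rule TC[of "[imps ps a]"]) (use ps False in \<open>auto simp: tv_imps tv_conjs\<close>)
    then show ?thesis using ps False unfolding derives_def by blast
  qed
qed

lemma dv_cons:
  assumes "\<forall>v. (\<forall>q\<in>set qs. tv v q) \<longrightarrow> tv v a" "\<forall>q\<in>set qs. dv CS T q"
  shows "dv CS T a"
proof -
  from assms(2) have "\<forall>q\<in>set qs. \<exists>ps. set ps \<subseteq> T \<and> deriv CS (imps ps q)"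
    unfolding dv_def .
  from bchoice[OF this] obtain f where f: "\<forall>q\<in>set qs. set (f q) \<subseteq> T \<and> deriv CS (imps (f q) q)"
    by blast
  let ?P = "concat (map f qs)"
  have "deriv CS (imps ?P a)"
  proof (rule TC[of "map (\<lambda>q. imps (f q) q) qs"])
    show "\<forall>v. (\<forall>q\<in>set (map (\<lambda>q. imps (f q) q) qs). tv v q) \<longrightarrow> tv v (imps ?P a)"
    proof (intro allI impI)
      fix v assume h: "\<forall>q\<in>set (map (\<lambda>q. imps (f q) q) qs). tv v q"
      show "tv v (imps ?P a)" unfolding tv_imps
      proof
        assume "\<forall>p\<in>set ?P. tv v p"
        then have "\<forall>q\<in>set qs. tv v q" using h by (simp add: tv_imps)
        then show "tv v a" using assms(1) by blast
      qed
    qed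
  qed (use f in simp)
  moreover have "set ?P \<subseteq> T" using f by auto
  ultimately show ?thesis unfolding dv_def by blast
qed

lemma dv_mem: "a \<in> T \<Longrightarrow> dv CS T a"
  unfolding dv_def
proof (intro exI[of _ "[a]"] conjI)
  show "deriv CS (imps [a] a)" by (auto intro!: deriv.Ax axiom.A1 simp: taut_def)
qed simp

lemma dv_deriv: "deriv CS a \<Longrightarrow> dv CS T a"
  unfolding dv_def by (intro exI[of _ "[]"]) simp

lemma dv_ded: assumes "dv CS (insert b T) a" shows "dv CS T (Imp b a)"
proof -
  obtain ps where ps: "set ps \<subseteq> insert b T" "deriv CS (imps ps a)" using assms unfolding dv_def by blast
  let ?q = "filter (\<lambda>x. x \<noteq> b) ps"
  have "deriv CS (imps ?q (Imp b a))"
  proof (rule TC[of "[imps ps a]"])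
    show "\<forall>v. (\<forall>q\<in>set [imps ps a]. tv v q) \<longrightarrow> tv v (imps ?q (Imp b a))"
    proof (intro allI impI)
      fix v assume "\<forall>q\<in>set [imps ps a]. tv v q"
      then have h: "(\<forall>p\<in>set ps. tv v p) \<longrightarrow> tv v a" by (simp add: tv_imps)
      show "tv v (imps ?q (Imp b a))" unfolding tv_imps using h by auto
    qed
  qed (use ps in simp)
  moreover have "set ?q \<subseteq> T" using ps by auto
  ultimately show ?thesis unfolding dv_def by blast
qed

lemma mcs_cons: "max_consistent chi CS G \<Longrightarrow> \<not> dv CS G (fbot chi)"
  unfolding max_consistent_def consistent_def derives_dv by blast

lemma mcs_closed: assumes "max_consistent chi CS G" "dv CS G a" shows "a \<in> G"
proof (rule ccontr)
  assume "a \<notin> G"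
  then have "dv CS (insert a G) (fbot chi)" using assms(1)
    unfolding max_consistent_def consistent_def derives_dv by blast
  then have "dv CS G (Imp a (fbot chi))" by (rule dv_ded)
  then have "dv CS G (fbot chi)"
    by (intro dv_cons[of "[a, Imp a (fbot chi)]"]) (use assms(2) in auto)
  then show False using mcs_cons[OF assms(1)] by blast
qed

lemma mcs_ax: "max_consistent chi CS G \<Longrightarrow> deriv CS a \<Longrightarrow> a \<in> G"
  using mcs_closed dv_deriv by blast

lemma mcs_mp: assumes "max_consistent chi CS G" "Imp a b \<in> G" "a \<in> G" shows "b \<in> G"
  by (rule mcs_closed[OF assms(1)], rule dv_cons[of "[Imp a b, a]"]) (use assms in \<open>auto intro: dv_mem\<close>)

lemma mcs_neg: assumes "max_consistent chi CS G" shows "Neg a \<in> G \<longleftrightarrow> a \<notin> G"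
proof
  assume "Neg a \<in> G"
  show "a \<notin> G"
  proof
    assume "a \<in> G"
    have "dv CS G (fbot chi)"
      by (rule dv_cons[of "[a, Neg a]"]) (use \<open>a \<in> G\<close> \<open>Neg a \<in> G\<close> in \<open>auto intro: dv_mem\<close>)
    then show False using mcs_cons[OF assms] by blast
  qed
next
  assume "a \<notin> G"
  then have "dv CS (insert a G) (fbot chi)" using assms
    unfolding max_consistent_def consistent_def derives_dv by blast
  then have "dv CS G (Imp a (fbot chi))" by (rule dv_ded)
  then have "dv CS G (Neg a)"
    by (intro dv_cons[of "[Imp a (fbot chi)]"]) auto
  then show "Neg a \<in> G" using mcs_closed[OF assms] by blast
qed

lemma mcs_conj: assumes "max_consistent chi CS G" shows "Conj a b \<in> G \<longleftrightarrow> a \<in> G \<and> b \<in> G"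
proof
  assume h: "Conj a b \<in> G"
  have "dv CS G a" by (rule dv_cons[of "[Conj a b]"]) (use h in \<open>auto intro: dv_mem\<close>)
  moreover have "dv CS G b" by (rule dv_cons[of "[Conj a b]"]) (use h in \<open>auto intro: dv_mem\<close>)
  ultimately show "a \<in> G \<and> b \<in> G" using mcs_closed[OF assms] by blast
next
  assume h: "a \<in> G \<and> b \<in> G"
  have "dv CS G (Conj a b)" by (rule dv_cons[of "[a, b]"]) (use h in \<open>auto intro: dv_mem\<close>)
  then show "Conj a b \<in> G" using mcs_closed[OF assms] by blast
qed

lemma mcs_imp: assumes "max_consistent chi CS G" shows "Imp a b \<in> G \<longleftrightarrow> (a \<in> G \<longrightarrow> b \<in> G)"
proof
  assume "Imp a b \<in> G" then show "a \<in> G \<longrightarrow> b \<in> G" using mcs_mp[OF assms] by blast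
next
  assume h: "a \<in> G \<longrightarrow> b \<in> G"
  show "Imp a b \<in> G"
  proof (cases "a \<in> G")
    case True
    then have "b \<in> G" using h by blast
    have "dv CS G (Imp a b)" by (rule dv_cons[of "[b]"]) (use \<open>b \<in> G\<close> in \<open>auto intro: dv_mem\<close>)
    then show ?thesis using mcs_closed[OF assms] by blast
  next
    case False
    then have "Neg a \<in> G" using mcs_neg[OF assms] by blast
    have "dv CS G (Imp a b)" by (rule dv_cons[of "[Neg a]"]) (use \<open>Neg a \<in> G\<close> in \<open>auto intro: dv_mem\<close>)
    then show ?thesis using mcs_closed[OF assms] by blast
  qed
qed

fun ev :: "('c,'v,'p) fm \<Rightarrow> bool" where
  "ev (Atom p) = False" | "ev (Neg a) = (\<not> ev a)" | "ev (Conj a b) = (ev a \<and> ev b)"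
| "ev (Imp a b) = (ev a \<longrightarrow> ev b)" | "ev (Cond a b) = (ev a \<longrightarrow> ev b)" | "ev (Just t a) = ev a"

lemma tv_ev: "tv ev a = ev a" by (induction a) auto

lemma ax_ev: "axiom a \<Longrightarrow> ev a"
proof (induction rule: axiom.induct)
  case (A1 a) then show ?case using tv_ev[of a] unfolding taut_def by blast
qed auto

lemma deriv_ev: assumes "const_spec CS" shows "deriv CS a \<Longrightarrow> ev a"
proof (induction rule: deriv.induct)
  case (Ax a) then show ?case by (rule ax_ev)
next
  case (CSAx a) then show ?case using assms ax_ev unfolding const_spec_def by fastforce
qed auto

lemma lindenbaum:
  assumes "\<not> dv CS S (fbot chi)"
  shows "\<exists>G. S \<subseteq> G \<and> max_consistent chi CS G"
proof -
  let ?A = "{T. S \<subseteq> T \<and> \<not> dv CS T (fbot chi)}"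
  have "\<exists>M\<in>?A. \<forall>X\<in>?A. M \<subseteq> X \<longrightarrow> X = M"
  proof (rule subset_Zorn_nonempty)
    show "?A \<noteq> {}" using assms by blast
  next
    fix C assume C: "C \<noteq> {}" "subset.chain ?A C"
    then have CA: "C \<subseteq> ?A" and ch: "\<forall>X\<in>C. \<forall>Y\<in>C. X \<subseteq> Y \<or> Y \<subseteq> X"
      unfolding subset_chain_def by auto
    have fin: "finite F \<Longrightarrow> F \<subseteq> \<Union>C \<Longrightarrow> \<exists>X\<in>C. F \<subseteq> X" for F
    proof (induction F rule: finite_induct)
      case empty then show ?case using C(1) by blast
    next
      case (insert x F)
      then obtain X where X: "X \<in> C" "F \<subseteq> X" by auto
      obtain Y where Y: "Y \<in> C" "x \<in> Y" using insert by auto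
      from X Y ch have "X \<subseteq> Y \<or> Y \<subseteq> X" by blast
      then show ?case using X Y by blast
    qed
    show "\<Union>C \<in> ?A"
    proof safe
      fix x assume "x \<in> S"
      obtain X where "X \<in> C" using C(1) by blast
      then show "x \<in> \<Union>C" using CA \<open>x \<in> S\<close> by blast
    next
      assume "dv CS (\<Union>C) (fbot chi)"
      then obtain ps where ps: "set ps \<subseteq> \<Union>C" "deriv CS (imps ps (fbot chi))" unfolding dv_def by blast
      then obtain X where "X \<in> C" "set ps \<subseteq> X" using fin by blast
      then have "dv CS X (fbot chi)" using ps unfolding dv_def by blast
      then show False using CA \<open>X \<in> C\<close> by blast
    qed
  qed
  then obtain M where M: "S \<subseteq> M" "\<not> dv CS M (fbot chi)" "\<forall>X\<in>?A. M \<subseteq> X \<longrightarrow> X = M" by blast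
  have "max_consistent chi CS M"
    unfolding max_consistent_def consistent_def derives_dv
  proof safe
    show "dv CS M (fbot chi) \<Longrightarrow> False" using M by blast
  next
    fix a assume "a \<notin> M" "\<not> dv CS (insert a M) (fbot chi)"
    then have "insert a M \<in> ?A" using M by blast
    then have "insert a M = M" using M by blast
    then show False using \<open>a \<notin> M\<close> by blast
  qed
  then show ?thesis using M by blast
qed

lemma cm_simps[simp]:
  "mW (canonical_model chi CS) = UNIV"
  "mWN (canonical_model chi CS) = {G. max_consistent chi CS G}"
  "mRf (canonical_model chi CS) a = {(G, D). max_consistent chi CS G \<and> max_consistent chi CS D \<and> cslash_f G a \<subseteq> D}"
  "mRt (canonical_model chi CS) t = {(G, D). cslash_t G t \<subseteq> D}"
  "mVp (canonical_model chi CS) = (\<lambda>G. {p. Atom p \<in> G})"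
  "mVf (canonical_model chi CS) = (\<lambda>G. G)"
  by (simp_all add: canonical_model_def)

lemma cond_lemma:
  assumes "max_consistent chi CS G" "deriv CS (imps ps b)" "\<forall>p\<in>set ps. Cond a p \<in> G"
  shows "Cond a b \<in> G"
  using assms(2,3)
proof (induction ps arbitrary: b)
  case Nil then show ?case using mcs_ax[OF assms(1)] deriv.RCN by auto
next
  case (Cons p ps)
  have "deriv CS (imps ps (Imp p b))"
    by (rule TC[of "[imps (p#ps) b]"]) (use Cons.prems in \<open>auto simp: tv_imps\<close>)
  then have "Cond a (Imp p b) \<in> G" using Cons by auto
  moreover have "Imp (Cond a (Imp p b)) (Imp (Cond a p) (Cond a b)) \<in> G"
    by (rule mcs_ax[OF assms(1)]) (intro deriv.Ax axiom.A2)
  ultimately have "Imp (Cond a p) (Cond a b) \<in> G" using mcs_mp[OF assms(1)] by blast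
  moreover have "Cond a p \<in> G" using Cons.prems by simp
  ultimately show ?case using mcs_mp[OF assms(1)] by blast
qed

lemma truth: "sat (canonical_model chi CS) D a = (a \<in> D)"
proof (induction a arbitrary: D)
  case (Atom p) then show ?case by simp
next
  case (Neg a) show ?case
  proof (cases "max_consistent chi CS D")
    case True then show ?thesis using Neg.IH mcs_neg[OF True] by simp
  qed simp
next
  case (Conj a b) show ?case
  proof (cases "max_consistent chi CS D")
    case True then show ?thesis using Conj.IH mcs_conj[OF True] by simp
  qed simp
next
  case (Imp a b) show ?case
  proof (cases "max_consistent chi CS D")
    case True then show ?thesis using Imp.IH mcs_imp[OF True] by simp
  qed simp
next
  case (Just t a) show ?case
  proof (cases "max_consistent chi CS D")
    case True
    have "(\<forall>E. cslash_t D t \<subseteq> E \<longrightarrow> a \<in> E) \<longleftrightarrow> Just t a \<in> D"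
    proof
      assume "\<forall>E. cslash_t D t \<subseteq> E \<longrightarrow> a \<in> E"
      then have "a \<in> cslash_t D t" by blast
      then show "Just t a \<in> D" by (simp add: cslash_t_def)
    qed (auto simp: cslash_t_def)
    then show ?thesis using True Just.IH by simp
  qed simp
next
  case (Cond a b)
  show ?case
  proof (cases "max_consistent chi CS D")
    case False then show ?thesis by simp
  next
    case True
    have "(\<forall>E. max_consistent chi CS E \<and> cslash_f D a \<subseteq> E \<longrightarrow> b \<in> E) \<longleftrightarrow> Cond a b \<in> D"
    proof
      assume R: "\<forall>E. max_consistent chi CS E \<and> cslash_f D a \<subseteq> E \<longrightarrow> b \<in> E"
      show "Cond a b \<in> D"
      proof (rule ccontr)
        assume nc: "Cond a b \<notin> D"
        have "\<not> dv CS (insert (Neg b) (cslash_f D a)) (fbot chi)"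
        proof
          assume "dv CS (insert (Neg b) (cslash_f D a)) (fbot chi)"
          then have "dv CS (cslash_f D a) (Imp (Neg b) (fbot chi))" by (rule dv_ded)
          then have "dv CS (cslash_f D a) b" by (intro dv_cons[of "[Imp (Neg b) (fbot chi)]"]) auto
          then obtain ps where ps: "set ps \<subseteq> cslash_f D a" "deriv CS (imps ps b)" unfolding dv_def by blast
          have "\<forall>p\<in>set ps. Cond a p \<in> D" using ps(1) unfolding cslash_f_def by blast
          then have "Cond a b \<in> D" by (rule cond_lemma[OF True ps(2)])
          then show False using nc by blast
        qed
        from lindenbaum[OF this] obtain E where E: "insert (Neg b) (cslash_f D a) \<subseteq> E" "max_consistent chi CS E"
          by blast
        have "Neg b \<in> E" using E(1) by blast
        then have "b \<notin> E" using mcs_neg[OF E(2)] by blast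
        moreover have "b \<in> E" using R E by blast
        ultimately show False by blast
      qed
    next
      assume "Cond a b \<in> D"
      then show "\<forall>E. max_consistent chi CS E \<and> cslash_f D a \<subseteq> E \<longrightarrow> b \<in> E"
        unfolding cslash_f_def by blast
    qed
    moreover have "sat (canonical_model chi CS) D (Cond a b) \<longleftrightarrow>
       (\<forall>E. max_consistent chi CS E \<and> cslash_f D a \<subseteq> E \<longrightarrow> b \<in> E)"
      using True Cond.IH(2) by simp
    ultimately show ?thesis by blast
  qed
qed

lemma ext_cm: "ext (canonical_model chi CS) a = {D. a \<in> D}"
  unfolding ext_def by (simp add: truth)

lemma mcs_axI: "max_consistent chi CS G \<Longrightarrow> axiom a \<Longrightarrow> a \<in> G"
  using mcs_ax deriv.Ax by blast

lemma cond_mp: "max_consistent chi CS G \<Longrightarrow> Cond a b \<in> G \<Longrightarrow> a \<in> G \<Longrightarrow> b \<in> G"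
  using mcs_axI[of chi CS G "Imp (Cond a b) (Imp a b)"] axiom.A4 mcs_mp by blast

theorem mainTheorem9:
  fixes CS :: "('c::countable, 'v::countable, 'p::countable) fm set"
    and chi :: "('c, 'v, 'p) fm"
  assumes "const_spec CS"
  shows "lpc_model CS (canonical_model chi CS)"
proof -
  have ne: "\<exists>G. max_consistent chi CS G"
  proof -
    have "\<not> dv CS {} (fbot chi)"
    proof
      assume "dv CS {} (fbot chi)"
      then have "deriv CS (fbot chi)" unfolding dv_def by auto
      then have "ev (fbot chi)" using deriv_ev[OF assms] by blast
      then show False by (simp add: fbot_def)
    qed
    then show ?thesis using lindenbaum by blast
  qed
  have rm: "relational_model (canonical_model chi CS)"
    unfolding relational_model_def using ne by auto
  show ?thesis
    unfolding lpc_model_def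
  proof (intro conjI rm ballI allI impI)
    fix G assume "G \<in> mWN (canonical_model chi CS)"
    then have G: "max_consistent chi CS G" by simp
    let ?M = "canonical_model chi CS"
    show "mRf ?M a `` {G} \<subseteq> ext ?M a" for a
      using cond_mp[OF G, of a a] mcs_axI[OF G axiom.A3[of a]]
      by (auto simp: ext_cm cslash_f_def)
    show "(G, G) \<in> mRf ?M a" if "G \<in> ext ?M a" for a
      using that G cond_mp[OF G, of a] by (auto simp: ext_cm cslash_f_def)
    show "mRt ?M (TConst c) `` {G} \<subseteq> ext ?M a" if "Just (TConst c) a \<in> CS" for c a
      using that mcs_ax[OF G deriv.CSAx[OF that]] by (auto simp: ext_cm cslash_t_def)
    show "mRt ?M (TPlus s t) `` {G} \<subseteq> mRt ?M s `` {G} \<inter> mRt ?M t `` {G}" for s t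
      using cond_mp[OF G] mcs_axI[OF G axiom.A6] mcs_axI[OF G axiom.A7]
      by (auto simp: cslash_t_def) blast+
    show "v \<in> ext ?M b" if v: "v \<in> mRt ?M (TApp s t) `` {G}"
        and h: "G \<in> ext ?M (Conj (Just s (Cond a b)) (Just t a))" for s t v a b
    proof -
      have "Conj (Just s (Cond a b)) (Just t a) \<in> G" using h by (simp add: ext_cm)
      then have "Just (TApp s t) b \<in> G" using cond_mp[OF G] mcs_axI[OF G axiom.A5] by blast
      then show "v \<in> ext ?M b" using v by (auto simp: ext_cm cslash_t_def)
    qed
    show "(G, G) \<in> mRt ?M t" for t
      using cond_mp[OF G] mcs_axI[OF G axiom.A8] by (auto simp: cslash_t_def)
    show "(G, u) \<in> mRt ?M t" if h: "(G, v) \<in> mRt ?M (TBang t) \<and> (v, u) \<in> mRt ?M t" for t v u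
    proof -
      have "x \<in> u" if x: "Just t x \<in> G" for x
      proof -
        have "Just (TBang t) (Just t x) \<in> G" using x cond_mp[OF G] mcs_axI[OF G axiom.A9] by blast
        then have "Just t x \<in> v" using h by (auto simp: cslash_t_def)
        then show "x \<in> u" using h by (auto simp: cslash_t_def)
      qed
      then show ?thesis by (auto simp: cslash_t_def)
    qed
  qed
qed

end
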